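(* There exist an alphabet $A$ and words $\mathbf a,\mathbf b,\mathbf c,\mathbf d\in A^\ast$ with $\mathbf a\mathbf b=\mathbf c\mathbf d$ such that $\mathbf a:\mathbf b::_m\mathbf c:\mathbf d$ does not hold in $(A^\ast,\cdot,A^\ast)$.
   Context: $(A^\ast,\cdot,A^\ast)$ is the algebra whose universe is the set $A^\ast$ of all finite words over $A$ (including the empty word), with concatenation and every word as a constant. A justification is a pair of terms $s\to t$ with the variables of $t$ among those of $s$; monolinear justifications are those where $s,t$ contain only one fixed variable $x$, occurring at most once in $s$ and at most once in $t$. $\uparrow^m(\mathbf a\to\mathbf b)$ is the set of monolinear justifications $s\to t$ with $\mathbf a=s(\mathbf o)$, $\mathbf b=t(\mathbf o)$ for some value $\mathbf o$; $\uparrow^m(\mathbf a\to\mathbf b:\!\cdot\,\mathbf c\to\mathbf d):=\uparrow^m(\mathbf a\to\mathbf b)\cap\uparrow^m(\mathbf c\to\mathbf d)$. A monolinear justification is trivial if it lies in all sets $\uparrow^m(\mathbf a'\to\mathbf b':\!\cdot\,\mathbf c'\to\mathbf d')$. $\mathbf a\to\mathbf b:\!\cdot_m\,\mathbf c\to\mathbf d$ holds iff either (i) all justifications in $\uparrow^m(\mathbf a\to\mathbf b)\cup\uparrow^m(\mathbf c\to\mathbf d)$ are trivial, or (ii) $J_{\mathbf d}:=\uparrow^m(\mathbf a\to\mathbf b:\!\cdot\,\mathbf c\to\mathbf d)$ contains a non-trivial justification and for every $\mathbf d'$, $J_{\mathbf d}\subseteq J_{\mathbf d'}$ implies $J_{\mathbf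 d'}$ contains a non-trivial justification and $J_{\mathbf d'}\subseteq J_{\mathbf d}$ (ignoring trivial justifications). $\mathbf a:\mathbf b::_m\mathbf c:\mathbf d$ iff $\mathbf a\to\mathbf b:\!\cdot_m\,\mathbf c\to\mathbf d$, $\mathbf b\to\mathbf a:\!\cdot_m\,\mathbf d\to\mathbf c$, $\mathbf c\to\mathbf d:\!\cdot_m\,\mathbf a\to\mathbf b$, $\mathbf d\to\mathbf c:\!\cdot_m\,\mathbf b\to\mathbf a$ all hold. *)

theory Defs
  imports Main
begin

text \<open>Terms over the algebra (A*, concatenation, every word a constant) in the
  single fixed variable x (constructor Var).\<close>

datatype 'a trm = Var | Con "'a list" | Cat "'a trm" "'a trm"

fun nvar :: "'a trm \<Rightarrow> nat" where
  "nvar Var = 1"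
| "nvar (Con u) = 0"
| "nvar (Cat s t) = nvar s + nvar t"

fun consts_ok :: "'a set \<Rightarrow> 'a trm \<Rightarrow> bool" where
  "consts_ok A Var = True"
| "consts_ok A (Con u) = (u \<in> lists A)"
| "consts_ok A (Cat s t) = (consts_ok A s \<and> consts_ok A t)"

fun eval :: "'a trm \<Rightarrow> 'a list \<Rightarrow> 'a list" where
  "eval Var o' = o'"
| "eval (Con u) o' = u"
| "eval (Cat s t) o' = eval s o' @ eval t o'"

definition monolinear :: "'a set \<Rightarrow> 'a trm \<times> 'a trm \<Rightarrow> bool" where
  "monolinear A j \<longleftrightarrow> (case j of (s, t) \<Rightarrow>
     consts_ok A s \<and> consts_ok A t \<and> nvar s \<le> 1 \<and> nvar t \<le> 1
     \<and> (nvar t > 0 \<longrightarrow> nvar s > 0))"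

definition up :: "'a set \<Rightarrow> 'a list \<Rightarrow> 'a list \<Rightarrow> ('a trm \<times> 'a trm) set" where
  "up A a b = {(s, t). monolinear A (s, t) \<and>
      (\<exists>o' \<in> lists A. eval s o' = a \<and> eval t o' = b)}"

definition upJ :: "'a set \<Rightarrow> 'a list \<Rightarrow> 'a list \<Rightarrow> 'a list \<Rightarrow> 'a list
                   \<Rightarrow> ('a trm \<times> 'a trm) set" where
  "upJ A a b c d = up A a b \<inter> up A c d"

definition trivial :: "'a set \<Rightarrow> 'a trm \<times> 'a trm \<Rightarrow> bool" where
  "trivial A j \<longleftrightarrow> monolinear A j \<and>
     (\<forall>a'\<in>lists A. \<forall>b'\<in>lists A. \<forall>c'\<in>lists A. \<forall>d'\<in>lists A. j \<in> upJ A a' b' c' d')"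

definition nontriv :: "'a set \<Rightarrow> ('a trm \<times> 'a trm) set \<Rightarrow> ('a trm \<times> 'a trm) set" where
  "nontriv A J = {j \<in> J. \<not> trivial A j}"

definition arrow_m :: "'a set \<Rightarrow> 'a list \<Rightarrow> 'a list \<Rightarrow> 'a list \<Rightarrow> 'a list \<Rightarrow> bool" where
  "arrow_m A a b c d \<longleftrightarrow>
     (\<forall>j \<in> up A a b \<union> up A c d. trivial A j)
   \<or> (nontriv A (upJ A a b c d) \<noteq> {} \<and>
      (\<forall>d' \<in> lists A. nontriv A (upJ A a b c d) \<subseteq> nontriv A (upJ A a b c d') \<longrightarrow>
          nontriv A (upJ A a b c d') \<noteq> {} \<and>
          nontriv A (upJ A a b c d') \<subseteq> nontriv A (upJ A a b c d)))"

definition analogy_m :: "'a set \<Rightarrow> 'a list \<Rightarrow> 'a list \<Rightarrow> 'a list \<Rightarrow> 'a list \<Rightarrow> bool" where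
  "analogy_m A a b c d \<longleftrightarrow>
     arrow_m A a b c d \<and> arrow_m A b a d c \<and> arrow_m A c d a b \<and> arrow_m A d c b a"

end

theory Submission
  imports Defs
begin

lemma const_eval: "nvar s = 0 \<Longrightarrow> eval s o1 = eval s o2"
  by (induction s) auto

lemma lin_eval: "nvar s = 1 \<Longrightarrow> \<exists>u v. \<forall>o'. eval s o' = u @ o' @ v"
proof (induction s)
  case (Cat s1 s2)
  show ?case
  proof (cases "nvar s1 = 1")
    case True
    then have "nvar s2 = 0" using Cat.prems by simp
    with True Cat.IH(1) obtain u v where "\<forall>o'. eval s1 o' = u @ o' @ v" by blast
    then show ?thesis using const_eval[OF \<open>nvar s2 = 0\<close>]
      by (rule_tac x=u in exI, rule_tac x="v @ eval s2 []" in exI) simp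
  next
    case False
    then have "nvar s1 = 0" "nvar s2 = 1" using Cat.prems by auto
    with Cat.IH(2) obtain u v where "\<forall>o'. eval s2 o' = u @ o' @ v" by blast
    then show ?thesis using const_eval[OF \<open>nvar s1 = 0\<close>]
      by (rule_tac x="eval s1 [] @ u" in exI, rule_tac x=v in exI) simp
  qed
qed (simp_all, intro exI[of _ "[]"], simp)

lemma upJ_empty: "upJ A [] [0::nat] [0] [] = {}"
proof (rule ccontr)
  assume "upJ A [] [0::nat] [0] [] \<noteq> {}"
  then obtain s t o1 o2 where m: "monolinear A (s,t)" and
    e: "eval s o1 = []" "eval t o1 = [0]" "eval s o2 = [0]" "eval t o2 = []"
  proof -
    from \<open>upJ A [] [0::nat] [0] [] \<noteq> {}\<close> obtain j where "j \<in> up A [] [0] \<inter> up A [0] []"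
      unfolding upJ_def by blast
    moreover obtain s t where "j = (s,t)" by (cases j)
    ultimately have "monolinear A (s,t)" "\<exists>o'. eval s o' = [] \<and> eval t o' = [0]"
      "\<exists>o'. eval s o' = [0] \<and> eval t o' = []"
      unfolding up_def by auto
    then show ?thesis using that by blast
  qed
  from m have ns: "nvar s \<le> 1" and nt: "nvar t \<le> 1" unfolding monolinear_def by auto
  show False
  proof (cases "nvar s = 0")
    case True
    then show False using const_eval[OF True, of o1 o2] e by simp
  next
    case False
    then have "nvar s = 1" using ns by simp
    then obtain u v where "\<forall>o'. eval s o' = u @ o' @ v" using lin_eval by blast
    then have o1: "o1 = []" using e by simp
    show False
    proof (cases "nvar t = 0")
      case True
      then show False using const_eval[OF True, of o1 o2] e by simp
    next
      case False
      then have "nvar t = 1" using nt by simp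
      then obtain u' v' where "\<forall>o'. eval t o' = u' @ o' @ v'" using lin_eval by blast
      then have "u' @ o2 @ v' = []" "u' @ o1 @ v' = [0]" using e by auto
      then show False using o1 by simp
    qed
  qed
qed

theorem mainTheorem13:
  shows "\<exists>A :: nat set. finite A \<and>
    (\<exists>a\<in>lists A. \<exists>b\<in>lists A. \<exists>c\<in>lists A. \<exists>d\<in>lists A.
        a @ b = c @ d \<and> \<not> analogy_m A a b c d)"
proof -
  let ?A = "{0::nat}"
  have j: "(Con [], Con [0]) \<in> up ?A [] [0]"
    unfolding up_def monolinear_def by auto
  have nt: "\<not> trivial ?A (Con [], Con [0::nat])"
  proof
    assume "trivial ?A (Con [], Con [0::nat])"
    then have "(Con [], Con [0::nat]) \<in> upJ ?A [] [] [] []"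
      unfolding trivial_def by (meson lists.Nil)
    then show False unfolding upJ_def up_def by simp
  qed
  have n1: "\<not> (\<forall>j \<in> up ?A [] [0] \<union> up ?A [0] []. trivial ?A j)"
    using j nt by blast
  have n2: "nontriv ?A (upJ ?A [] [0] [0] []) = {}"
    unfolding nontriv_def upJ_empty by simp
  have "\<not> arrow_m ?A [] [0] [0] []"
    unfolding arrow_m_def using n1 n2 by blast
  then have "\<not> analogy_m ?A [] [0] [0] []" unfolding analogy_m_def by simp
  moreover have "[] \<in> lists ?A" "[0] \<in> lists ?A" by auto
  ultimately show ?thesis
    apply (intro exI[of _ ?A] conjI)
     apply simp
    apply (rule bexI[of _ "[]"], rule bexI[of _ "[0]"], rule bexI[of _ "[0]"], rule bexI[of _ "[]"])
    by simp_all
qed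

end
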